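(* Let $d\ge2$, let $N^+=\frac{(d-1)\sqrt{d+1}-1}{d}$, and let $\{Q_j\}_{j=1}^{d^2}$ be an NQPR in dimension $d$. Then the number of density operators $\rho$ on $\mathbb{C}^d$ with $N(\rho)=N^+$ is at most $d^2$, and equals $d^2$ if and only if there is a SIC $\{\Pi_j\}_{j=1}^{d^2}$ such that $Q_j=Q_j^+$ for all $j$.
   Context: An NQPR in dimension $d$ is a family $\{Q_j\}_{j=1}^{d^2}$ of Hermitian operators on $\mathbb{C}^d$ with $\operatorname{tr}(Q_j)=1$ and $\operatorname{tr}(Q_jQ_k)=d\,\delta_{jk}$. The negativity of a density operator $\rho$ with respect to $\{Q_j\}$ is $N(\rho)=\max\{0,-\min_j\operatorname{tr}(\rho Q_j)\}$. A SIC in dimension $d$ is a set $\{\Pi_j\}_{j=1}^{d^2}$ of rank-one projectors with $\operatorname{tr}(\Pi_j\Pi_k)=(d\delta_{jk}+1)/(d+1)$; given a SIC, $Q_j^+=-\sqrt{d+1}\,\Pi_j+\frac{1}{d}(1+\sqrt{d+1})$, with $1$ the identity in the operator term. *)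

theory Defs
  imports "HOL-Analysis.Analysis"
begin

text \<open>Operators on C^d are represented as matrices of type complex^'n^'n,
  where d = CARD('n). Families of d^2 operators are indexed by j < d^2 (0-based).\<close>

definition cadj :: "complex^'n^'n \<Rightarrow> complex^'n^'n" where
  "cadj A = (\<chi> i j. cnj (A $ j $ i))"

definition hermitian_op :: "complex^'n^'n \<Rightarrow> bool" where
  "hermitian_op A \<longleftrightarrow> cadj A = A"

definition cinner :: "complex^'n \<Rightarrow> complex^'n \<Rightarrow> complex" where
  "cinner x y = (\<Sum>i\<in>UNIV. cnj (x $ i) * y $ i)"

definition density_op :: "complex^'n^'n \<Rightarrow> bool" where
  "density_op \<rho> \<longleftrightarrow> hermitian_op \<rho> \<and> (\<forall>x. 0 \<le> Re (cinner x (\<rho> *v x))) \<and> trace \<rho> = 1"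

definition NQPR :: "(nat \<Rightarrow> complex^'n^'n) \<Rightarrow> bool" where
  "NQPR Q \<longleftrightarrow> (let d = CARD('n) in
     (\<forall>j<d^2. hermitian_op (Q j) \<and> trace (Q j) = 1) \<and>
     (\<forall>j<d^2. \<forall>k<d^2. trace (Q j ** Q k) = (if j = k then of_nat d else 0)))"

definition negativity :: "(nat \<Rightarrow> complex^'n^'n) \<Rightarrow> complex^'n^'n \<Rightarrow> real" where
  "negativity Q \<rho> = max 0 (- Min ((\<lambda>j. Re (trace (\<rho> ** Q j))) ` {..<CARD('n)^2}))"

definition rank_one_projector :: "complex^'n^'n \<Rightarrow> bool" where
  "rank_one_projector P \<longleftrightarrow> (\<exists>v. cinner v v = 1 \<and> P = (\<chi> i j. v $ i * cnj (v $ j)))"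

definition SIC :: "(nat \<Rightarrow> complex^'n^'n) \<Rightarrow> bool" where
  "SIC P \<longleftrightarrow> (let d = CARD('n) in
     (\<forall>j<d^2. rank_one_projector (P j)) \<and>
     (\<forall>j<d^2. \<forall>k<d^2. trace (P j ** P k) =
        of_real ((real d * (if j = k then 1 else 0) + 1) / (real d + 1))))"

definition Qplus :: "(nat \<Rightarrow> complex^'n^'n) \<Rightarrow> nat \<Rightarrow> complex^'n^'n" where
  "Qplus P j = (let d = real CARD('n) in
     (\<chi> a b. - of_real (sqrt (d + 1)) * (P j $ a $ b)
              + of_real ((1 + sqrt (d + 1)) / d) * (mat 1 :: complex^'n^'n) $ a $ b))"

definition Nplus :: "nat \<Rightarrow> real" where
  "Nplus d = ((real d - 1) * sqrt (real d + 1) - 1) / real d"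

end

theory Submission
  imports Defs
begin


lemma trace_mult_eq: "trace ((A::complex^'n^'n) ** B) = (\<Sum>i\<in>UNIV. \<Sum>k\<in>UNIV. A$i$k * B$k$i)"
  by (simp add: trace_def matrix_matrix_mult_def)

lemma scaleR_mat_comp: "((r::real) *\<^sub>R (A::complex^'n^'n)) $ i $ k = of_real r * A$i$k"
  by (simp only: vector_scaleR_component) (simp add: scaleR_conv_of_real)

lemma sum_mat_comp: "(sum f J :: complex^'n^'n) $ i $ k = (\<Sum>j\<in>J. f j $ i $ k)"
  by (simp add: sum_component)

lemma tr_add_l: "trace (((A::complex^'n^'n) + B) ** C) = trace (A ** C) + trace (B ** C)"
  by (simp add: trace_mult_eq distrib_right sum.distrib)
lemma tr_diff_l: "trace (((A::complex^'n^'n) - B) ** C) = trace (A ** C) - trace (B ** C)"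
  by (simp add: trace_mult_eq left_diff_distrib sum_subtractf)
lemma tr_scale_l: "trace (((r::real) *\<^sub>R (A::complex^'n^'n)) ** C) = of_real r * trace (A ** C)"
  unfolding trace_mult_eq scaleR_mat_comp by (simp add: sum_distrib_left mult.assoc)
lemma tr_sum_l: "finite J \<Longrightarrow> trace ((sum f J :: complex^'n^'n) ** C) = (\<Sum>j\<in>J. trace (f j ** C))"
proof -
  assume J: "finite J"
  have "trace ((sum f J :: complex^'n^'n) ** C) = (\<Sum>i\<in>UNIV. \<Sum>k\<in>UNIV. \<Sum>j\<in>J. f j$i$k * C$k$i)"
    unfolding trace_mult_eq sum_mat_comp sum_distrib_right ..
  also have "\<dots> = (\<Sum>i\<in>UNIV. \<Sum>j\<in>J. \<Sum>k\<in>UNIV. f j$i$k * C$k$i)"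
    by (rule sum.cong[OF refl], rule sum.swap)
  also have "\<dots> = (\<Sum>j\<in>J. \<Sum>i\<in>UNIV. \<Sum>k\<in>UNIV. f j$i$k * C$k$i)"
    by (rule sum.swap)
  finally show ?thesis unfolding trace_mult_eq .
qed
lemma tr_I_l: "trace ((mat 1 :: complex^'n^'n) ** C) = trace C"
  by simp
lemma tr_add_r: "trace ((C::complex^'n^'n) ** (A + B)) = trace (C ** A) + trace (C ** B)"
  by (metis tr_add_l trace_mul_sym)
lemma tr_diff_r: "trace ((C::complex^'n^'n) ** (A - B)) = trace (C ** A) - trace (C ** B)"
  by (metis tr_diff_l trace_mul_sym)
lemma tr_scale_r: "trace ((C::complex^'n^'n) ** ((r::real) *\<^sub>R A)) = of_real r * trace (C ** A)"
  by (metis tr_scale_l trace_mul_sym)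
lemma tr_sum_r: "finite J \<Longrightarrow> trace ((C::complex^'n^'n) ** sum f J) = (\<Sum>j\<in>J. trace (C ** f j))"
  by (simp add: trace_mul_sym[of C] tr_sum_l)
lemma tr_I_r: "trace ((C::complex^'n^'n) ** mat 1) = trace C"
  by simp

lemma herm_comp: "hermitian_op A \<Longrightarrow> A $ k $ i = cnj (A $ i $ k)"
proof -
  assume h: "hermitian_op A"
  have "A $ k $ i = cadj A $ k $ i" using h by (simp add: hermitian_op_def)
  thus ?thesis by (simp add: cadj_def)
qed

lemma herm_tr_real: assumes "hermitian_op (A::complex^'n^'n)" "hermitian_op B"
  shows "cnj (trace (A ** B)) = trace (A ** B)"
proof -
  have "cnj (trace (A ** B)) = (\<Sum>i\<in>UNIV. \<Sum>k\<in>UNIV. A$k$i * B$i$k)"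
    unfolding trace_mult_eq cnj_sum complex_cnj_mult
    by (intro sum.cong refl) (metis herm_comp assms mult.commute)
  also have "\<dots> = trace (A ** B)" unfolding trace_mult_eq by (rule sum.swap)
  finally show ?thesis .
qed

lemma herm_tr_real': "hermitian_op (A::complex^'n^'n) \<Longrightarrow> hermitian_op B \<Longrightarrow> trace (A ** B) = of_real (Re (trace (A ** B)))"
  by (metis Reals_cnj_iff complex_is_Real_iff herm_tr_real of_real_Re)

lemma herm_sq: assumes "hermitian_op (X::complex^'n^'n)"
  shows "trace (X ** X) = of_real (\<Sum>i\<in>UNIV. \<Sum>k\<in>UNIV. (cmod (X$i$k))^2)"
  unfolding trace_mult_eq of_real_sum
proof (intro sum.cong refl)
  fix i k show "X $ i $ k * X $ k $ i = complex_of_real ((cmod (X $ i $ k))\<^sup>2)"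
    using herm_comp[OF assms, of k i] by (simp add: complex_mult_cnj cmod_def)
qed


definition psd :: "complex^'n^'n \<Rightarrow> bool" where
  "psd P \<longleftrightarrow> (\<forall>x. 0 \<le> Re (cinner x (P *v x)))"

lemma cinner_add_l: "cinner (x + y) z = cinner x z + cinner y z"
  by (simp add: cinner_def distrib_right sum.distrib)
lemma cinner_add_r: "cinner z (x + y) = cinner z x + cinner z y"
  by (simp add: cinner_def distrib_left sum.distrib)
lemma cinner_scaleR_l: "cinner ((t::real) *\<^sub>R x) z = of_real t * cinner x z"
  by (simp only: cinner_def vector_scaleR_component) (simp add: sum_distrib_left scaleR_conv_of_real mult.assoc)
lemma cinner_scaleR_r: "cinner z ((t::real) *\<^sub>R x) = of_real t * cinner z x"
  by (simp only: cinner_def vector_scaleR_component) (simp add: sum_distrib_left scaleR_conv_of_real mult.assoc mult.left_commute)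
lemma mv_scaleR: "(P::complex^'n^'n) *v ((t::real) *\<^sub>R x) = t *\<^sub>R (P *v x)"
  by (simp only: vec_eq_iff matrix_vector_mult_def vec_lambda_beta vector_scaleR_component)
    (simp add: scaleR_conv_of_real sum_distrib_left mult.left_commute)
lemma cinner_axis_l: "cinner (axis i c) z = cnj c * z $ i"
proof -
  have "(\<Sum>a\<in>UNIV. cnj (axis i c $ a) * z$a) = (\<Sum>a\<in>UNIV. if a = i then cnj c * z$i else 0)"
    by (rule sum.cong) (auto simp: axis_def)
  thus ?thesis by (simp add: cinner_def)
qed
lemma cinner_self: "cinner x x = of_real (\<Sum>i\<in>UNIV. (cmod (x$i))^2)"
  unfolding cinner_def of_real_sum
  by (intro sum.cong refl) (simp only: complex_norm_square mult.commute)
lemma cinner_self_eq0: "cinner x x = 0 \<Longrightarrow> x = 0"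
proof -
  assume "cinner x x = 0"
  hence "(\<Sum>i\<in>UNIV. (cmod (x$i))^2) = 0" unfolding cinner_self of_real_eq_0_iff .
  hence "\<forall>i\<in>UNIV. (cmod (x$i))^2 = 0" by (subst sum_nonneg_eq_0_iff[symmetric]) auto
  thus "x = 0" by (simp add: vec_eq_iff)
qed
lemma mv_axis: "((P::complex^'n^'n) *v axis i c) $ m = P$m$i * c"
  by (simp add: matrix_vector_mult_def axis_def if_distrib cong: if_cong)

lemma cinner_herm: assumes "hermitian_op P"
  shows "cinner x (P *v y) = cnj (cinner y (P *v x))"
proof -
  have "cinner x (P *v y) = (\<Sum>a\<in>UNIV. \<Sum>b\<in>UNIV. cnj (x$a) * P$a$b * y$b)"
    by (simp add: cinner_def matrix_vector_mult_def sum_distrib_left mult.assoc)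
  also have "\<dots> = (\<Sum>b\<in>UNIV. \<Sum>a\<in>UNIV. cnj (x$a) * P$a$b * y$b)" by (rule sum.swap)
  also have "\<dots> = cnj (\<Sum>b\<in>UNIV. \<Sum>a\<in>UNIV. cnj (y$b) * P$b$a * x$a)"
    unfolding cnj_sum complex_cnj_mult complex_cnj_cnj
    by (intro sum.cong refl) (metis herm_comp assms mult.commute mult.assoc)
  also have "\<dots> = cnj (cinner y (P *v x))"
    by (simp add: cinner_def matrix_vector_mult_def sum_distrib_left mult.assoc)
  finally show ?thesis .
qed

lemma quad_lemma: assumes "\<And>t::real. 0 \<le> 2*t*L + t^2*M" "M \<ge> 0" shows "L = 0"
proof (rule ccontr)
  assume "L \<noteq> 0"
  define t where "t = - L / (M + 1)"
  have M1: "M + 1 > 0" using assms(2) by simp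
  have Lt: "L = - t * (M + 1)" using M1 unfolding t_def by simp
  have "t \<noteq> 0" using \<open>L \<noteq> 0\<close> Lt by auto
  have "0 \<le> 2*t*L + t^2*M" by (rule assms(1))
  also have "2*t*L + t^2*M = - (t^2 * (M+2))"
    unfolding Lt by (simp add: algebra_simps power2_eq_square)
  also have "\<dots> < 0" using \<open>t \<noteq> 0\<close> assms(2) by simp
  finally show False by simp
qed

lemma psd_null: assumes "hermitian_op P" "psd P" "Re (cinner x (P *v x)) = 0"
  shows "P *v x = 0"
proof -
  let ?y = "P *v x"
  have "\<And>t::real. 0 \<le> 2*t*Re (cinner ?y (P *v x)) + t^2 * Re (cinner ?y (P *v ?y))"
  proof -
    fix t :: real
    have "0 \<le> Re (cinner (x + t *\<^sub>R ?y) (P *v (x + t *\<^sub>R ?y)))"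
      using assms(2) psd_def by blast
    also have "cinner (x + t *\<^sub>R ?y) (P *v (x + t *\<^sub>R ?y)) =
       cinner x (P *v x) + of_real t * cinner x (P *v ?y) + of_real t * cinner ?y (P *v x)
       + of_real t * of_real t * cinner ?y (P *v ?y)"
      by (simp add: matrix_vector_right_distrib mv_scaleR cinner_add_l
            cinner_add_r cinner_scaleR_l cinner_scaleR_r algebra_simps)
    also have "cinner x (P *v ?y) = cnj (cinner ?y (P *v x))" by (rule cinner_herm[OF assms(1)])
    finally show "0 \<le> 2*t*Re (cinner ?y (P *v x)) + t^2 * Re (cinner ?y (P *v ?y))"
      using assms(3) by (simp add: power2_eq_square)
  qed
  moreover have "0 \<le> Re (cinner ?y (P *v ?y))" using assms(2) psd_def by blast
  ultimately have "Re (cinner ?y (P *v x)) = 0" by (rule quad_lemma)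
  hence "cinner ?y ?y = 0" by (simp add: cinner_self)
  thus ?thesis by (rule cinner_self_eq0)
qed



lemma herm_diag_real: "hermitian_op P \<Longrightarrow> P$i$i = of_real (Re (P$i$i))"
  using herm_comp[of P i i] by (metis Reals_cnj_iff complex_is_Real_iff of_real_Re)

lemma quad_axis: "cinner (axis i c) (P *v axis i c) = cnj c * P$i$i * c"
  by (simp add: cinner_axis_l mv_axis mult.assoc)

lemma psd_diag: "psd P \<Longrightarrow> 0 \<le> Re (P$i$i)"
proof -
  assume "psd P"
  hence "0 \<le> Re (cinner (axis i 1) (P *v axis i 1))" by (simp add: psd_def)
  thus ?thesis by (simp add: quad_axis)
qed

lemma quad_two: assumes "i \<noteq> a"
  shows "cinner (axis i \<alpha> + axis a \<beta>) ((P::complex^'n^'n) *v (axis i \<alpha> + axis a \<beta>)) =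
     cnj \<alpha> * (P$i$i * \<alpha> + P$i$a * \<beta>) + cnj \<beta> * (P$a$i * \<alpha> + P$a$a * \<beta>)"
  using assms by (simp add: matrix_vector_right_distrib cinner_add_l cinner_axis_l mv_axis)

lemma quad_special: assumes "hermitian_op P" "i \<noteq> a"
  shows "Re (cinner (axis i (P$a$a) + axis a (- P$a$i)) (P *v (axis i (P$a$a) + axis a (- P$a$i))))
     = Re (P$a$a) * (Re (P$a$a) * Re (P$i$i) - (cmod (P$a$i))^2)"
proof -
  define p where "p = Re (P$a$a)"
  define r where "r = Re (P$i$i)"
  define z where "z = P$a$i"
  have hp: "P$a$a = of_real p" unfolding p_def by (rule herm_diag_real[OF assms(1)])
  have hr: "P$i$i = of_real r" unfolding r_def by (rule herm_diag_real[OF assms(1)])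
  have hz: "P$i$a = cnj z" unfolding z_def by (rule herm_comp[OF assms(1)])
  have "cinner (axis i (P$a$a) + axis a (- P$a$i)) (P *v (axis i (P$a$a) + axis a (- P$a$i)))
     = of_real p * (of_real r * of_real p - z * cnj z)"
    unfolding quad_two[OF assms(2)] hp hr hz z_def[symmetric] by (simp add: algebra_simps)
  also have "\<dots> = of_real (p * (p * r - (cmod z)^2))"
    by (simp add: complex_norm_square[symmetric] algebra_simps)
  finally show ?thesis by (simp add: p_def r_def z_def mult.commute)
qed

lemma psd_cs: assumes "hermitian_op P" "psd P"
  shows "(cmod (P$a$i))^2 \<le> Re (P$a$a) * Re (P$i$i)"
proof (cases "i = a")
  case True
  thus ?thesis using herm_diag_real[OF assms(1), of a]
    by (metis abs_of_nonneg norm_of_real power2_eq_square power2_abs psd_diag[OF assms(2)] order_refl)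
next
  case ne: False
  show ?thesis
  proof (cases "Re (P$a$a) = 0")
    case True
    have "Re (cinner (axis a 1) (P *v axis a 1)) = 0" using True by (simp add: quad_axis)
    hence "P *v axis a 1 = 0" by (rule psd_null[OF assms])
    hence "(P *v axis a 1) $ i = 0" by simp
    hence "P$i$a = 0" by (simp add: mv_axis)
    hence "P$a$i = 0" using herm_comp[OF assms(1), of a i] by simp
    thus ?thesis using True by simp
  next
    case False
    hence pos: "Re (P$a$a) > 0" using psd_diag[OF assms(2), of a] by simp
    have "0 \<le> Re (cinner (axis i (P$a$a) + axis a (- P$a$i)) (P *v (axis i (P$a$a) + axis a (- P$a$i))))"
      using assms(2) psd_def by blast
    hence "0 \<le> Re (P$a$a) * (Re (P$a$a) * Re (P$i$i) - (cmod (P$a$i))^2)"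
      unfolding quad_special[OF assms(1) ne] .
    thus ?thesis using pos by (simp add: zero_le_mult_iff)
  qed
qed

lemma psd_cs_eq: assumes "hermitian_op P" "psd P" "Re (P$a$a) > 0"
  "(cmod (P$a$i))^2 = Re (P$a$a) * Re (P$i$i)"
  shows "P$m$i * P$a$a = P$m$a * P$a$i"
proof (cases "i = a")
  case True thus ?thesis by simp
next
  case ne: False
  let ?x = "axis i (P$a$a) + axis a (- P$a$i)"
  have "Re (cinner ?x (P *v ?x)) = 0" unfolding quad_special[OF assms(1) ne] using assms(4) by simp
  hence "P *v ?x = 0" by (rule psd_null[OF assms(1,2)])
  hence "(P *v ?x) $ m = 0" by simp
  thus ?thesis by (simp add: matrix_vector_right_distrib mv_axis)
qed


lemma re_trace: "Re (trace P) = (\<Sum>i\<in>UNIV. Re (P$i$i))"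
  by (simp add: trace_def)

lemma tr_sq_le: assumes "hermitian_op (P::complex^'n^'n)" "psd P" "trace P = 1"
  shows "Re (trace (P ** P)) \<le> 1"
proof -
  have "Re (trace (P ** P)) = (\<Sum>i\<in>UNIV. \<Sum>k\<in>UNIV. (cmod (P$i$k))^2)"
    unfolding herm_sq[OF assms(1)] by simp
  also have "\<dots> \<le> (\<Sum>i\<in>UNIV. \<Sum>k\<in>UNIV. Re (P$i$i) * Re (P$k$k))"
    by (intro sum_mono psd_cs[OF assms(1,2)])
  also have "\<dots> = (\<Sum>i\<in>UNIV. Re (P$i$i)) * (\<Sum>k\<in>UNIV. Re (P$k$k))"
    by (simp add: sum_product)
  also have "\<dots> = 1" using assms(3) by (simp add: re_trace[symmetric])
  finally show ?thesis .
qed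

lemma rank_one: assumes "hermitian_op (P::complex^'n^'n)" "psd P" "trace P = 1" "trace (P ** P) = 1"
  shows "rank_one_projector P"
proof -
  have "(\<Sum>i\<in>UNIV. \<Sum>k\<in>UNIV. Re (P$i$i) * Re (P$k$k) - (cmod (P$i$k))^2)
      = (\<Sum>i\<in>UNIV. Re (P$i$i)) * (\<Sum>k\<in>UNIV. Re (P$k$k)) - Re (trace (P ** P))"
    unfolding herm_sq[OF assms(1)] by (simp add: sum_product sum_subtractf)
  also have "\<dots> = 0" using assms(3,4) by (simp add: re_trace[symmetric])
  finally have z: "(\<Sum>i\<in>UNIV. \<Sum>k\<in>UNIV. Re (P$i$i) * Re (P$k$k) - (cmod (P$i$k))^2) = 0" .
  have nn: "\<And>i k. 0 \<le> Re (P$i$i) * Re (P$k$k) - (cmod (P$i$k))^2"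
    using psd_cs[OF assms(1,2)] by simp
  define f where "f = (\<lambda>i k. Re (P$i$i) * Re (P$k$k) - (cmod (P$i$k))^2)"
  have fnn: "\<And>i k. 0 \<le> f i k" unfolding f_def by (rule nn)
  have z': "(\<Sum>i\<in>UNIV. \<Sum>k\<in>UNIV. f i k) = 0" unfolding f_def by (rule z)
  have row: "\<And>i. (\<Sum>k\<in>UNIV. f i k) = 0"
  proof -
    fix i
    have "\<forall>i\<in>UNIV. (\<Sum>k\<in>UNIV. f i k) = 0"
      using sum_nonneg_eq_0_iff[of UNIV "\<lambda>i. \<Sum>k\<in>UNIV. f i k"] z' fnn
      by (simp add: sum_nonneg)
    thus "(\<Sum>k\<in>UNIV. f i k) = 0" by simp
  qed
  have "\<And>i k. f i k = 0"
  proof -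
    fix i k
    have "\<forall>k\<in>UNIV. f i k = 0"
      using sum_nonneg_eq_0_iff[of UNIV "\<lambda>k. f i k"] row[of i] fnn by simp
    thus "f i k = 0" by simp
  qed
  hence eq: "\<And>i k. (cmod (P$i$k))^2 = Re (P$i$i) * Re (P$k$k)" unfolding f_def by simp
  have "\<exists>a. Re (P$a$a) > 0"
  proof (rule ccontr)
    assume "\<nexists>a. Re (P$a$a) > 0"
    have "\<And>a. Re (P$a$a) = 0"
    proof -
      fix a have "\<not> 0 < Re (P$a$a)" "0 \<le> Re (P$a$a)" using \<open>\<nexists>a. 0 < Re (P$a$a)\<close> psd_diag[OF assms(2)] by auto
      thus "Re (P$a$a) = 0" by linarith
    qed
    hence "Re (trace P) = 0" by (simp add: re_trace)
    thus False using assms(3) by simp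
  qed
  then obtain a where pos: "Re (P$a$a) > 0" by blast
  define p where "p = Re (P$a$a)"
  have hp: "P$a$a = of_real p" unfolding p_def by (rule herm_diag_real[OF assms(1)])
  define v :: "complex^'n" where "v = (\<chi> m. P$m$a / of_real (sqrt p))"
  have pp: "p > 0" using pos p_def by simp
  have sq: "of_real (sqrt p) * of_real (sqrt p) = (of_real p :: complex)"
    using pp by (simp flip: of_real_mult)
  have "P = (\<chi> i j. v $ i * cnj (v $ j))"
  proof (simp add: vec_eq_iff, intro allI)
    fix i j
    have e: "P$i$j * P$a$a = P$i$a * P$a$j" by (rule psd_cs_eq[OF assms(1,2) pos eq])
    have c: "cnj (P$j$a) = P$a$j" using herm_comp[OF assms(1), of a j] by simp
    have "v$i * cnj (v$j) = P$i$a * P$a$j / (of_real (sqrt p) * of_real (sqrt p))"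
      by (simp add: v_def c)
    also have "\<dots> = P$i$j" unfolding sq e[symmetric] hp using pp by simp
    finally show "P$i$j = v$i * cnj (v$j)" by simp
  qed
  moreover have "cinner v v = 1"
  proof -
    have "cinner v v = of_real (\<Sum>m\<in>UNIV. (cmod (P$m$a))^2 / p)"
      unfolding cinner_self v_def using pp by (simp add: norm_divide power_divide)
    also have "(\<Sum>m\<in>UNIV. (cmod (P$m$a))^2 / p) = (\<Sum>m\<in>UNIV. Re (P$m$m))"
    proof (rule sum.cong[OF refl])
      fix m
      have "cmod (P$m$a) = cmod (P$a$m)" using herm_comp[OF assms(1), of a m] by simp
      thus "(cmod (P$m$a))^2 / p = Re (P$m$m)" using eq[of a m] pp p_def by simp
    qed
    also have "\<dots> = 1" using assms(3) by (simp add: re_trace[symmetric])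
    finally show ?thesis by simp
  qed
  ultimately show ?thesis unfolding rank_one_projector_def by blast
qed



lemma realfacts:
  fixes d s N c :: real assumes d2: "d \<ge> 2"
  and s_def: "s = sqrt (d + 1)" and N_def: "N = ((d - 1) * s - 1) / d" and c_def: "c = (1 + s) / (d * s)"
  shows "s^2 = d + 1" "s > 1" "N > 0" "N + c = d / s" "c = (d + N) / (d^2 - 1)"
    "d * N^2 + 2 * N = d^2 - d - 1"
    "- s + (1 + s) / d = - N" "- s / (d + 1) + (1 + s) / d > 0"
    "s * c = (1 + s) / d"
    "c^2 * d - 2 * c / s = 1 / (d + 1)" "c^2 * d - 2 * c / s + d / s^2 = 1"
proof -
  show s2: "s^2 = d + 1" unfolding s_def using d2 by simp
  have s1: "s > 1" unfolding s_def using d2 by simp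
  thus "s > 1" .
  have d0: "d > 0" using d2 by simp
  have d1: "d + 1 > 0" using d2 by simp
  have "1 * s \<le> (d - 1) * s" using s1 d2 by (intro mult_right_mono) auto
  hence "(d - 1) * s > 1" using s1 by linarith
  thus "N > 0" unfolding N_def using d0 by simp
  show NC: "N + c = d / s" unfolding N_def c_def using d0 s1 s2
    by (simp add: field_simps power2_eq_square)
  show "d * N^2 + 2 * N = d^2 - d - 1" unfolding N_def using d0 s1 s2
    by (simp add: field_simps power2_eq_square)
  have "d^2 \<ge> 2^2" using power_mono[of 2 d 2] d2 by simp
  hence n0: "d^2 - 1 > 0" by simp
  show "c = (d + N) / (d^2 - 1)" unfolding N_def c_def using d0 s1 n0 s2
    by (simp add: field_simps power2_eq_square)
  show "- s + (1 + s) / d = - N" unfolding N_def using d0 by (simp add: field_simps)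
  have "- s / (d + 1) + (1 + s) / d = (1 + s + d) / (d * (d + 1))" using d0 d1
    by (simp add: field_simps)
  also have "\<dots> > 0" using d0 s1 d1 by simp
  finally show "- s / (d + 1) + (1 + s) / d > 0" .
  show sc: "s * c = (1 + s) / d" unfolding c_def using d0 s1 by (simp add: field_simps)
  have "c^2 * d - 2 * c / s = ((1 + s)^2 - 2 * (1 + s)) / (d * s^2)"
    unfolding c_def using d0 s1 by (simp add: field_simps power2_eq_square)
  also have "(1 + s)^2 - 2 * (1 + s) = s^2 - 1" by (simp add: power2_eq_square algebra_simps)
  also have "(s^2 - 1) / (d * s^2) = 1 / (d + 1)" unfolding s2 using d0 d1 by simp
  finally show C1: "c^2 * d - 2 * c / s = 1 / (d + 1)" .
  show "c^2 * d - 2 * c / s + d / s^2 = 1" unfolding C1 s2 using d1 by (simp add: field_simps)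
qed



lemma herm_add: "hermitian_op A \<Longrightarrow> hermitian_op B \<Longrightarrow> hermitian_op (A + B)"
  by (simp add: hermitian_op_def cadj_def vec_eq_iff)
lemma herm_diff: "hermitian_op A \<Longrightarrow> hermitian_op B \<Longrightarrow> hermitian_op (A - B)"
  by (simp add: hermitian_op_def cadj_def vec_eq_iff)
lemma herm_scale: "hermitian_op A \<Longrightarrow> hermitian_op ((r::real) *\<^sub>R A)"
  unfolding hermitian_op_def cadj_def vec_eq_iff
  by (simp only: scaleR_mat_comp vec_lambda_beta) (metis herm_comp hermitian_op_def cadj_def complex_cnj_mult complex_cnj_complex_of_real)
lemma herm_I: "hermitian_op (mat 1 :: complex^'n^'n)"
  by (simp add: hermitian_op_def cadj_def vec_eq_iff mat_def)
lemma herm_sum: "(\<And>j. j \<in> J \<Longrightarrow> hermitian_op (f j)) \<Longrightarrow> hermitian_op (sum f J :: complex^'n^'n)"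
proof (induction J rule: infinite_finite_induct)
  case (infinite A) thus ?case by (simp add: hermitian_op_def cadj_def vec_eq_iff)
next
  case empty thus ?case by (simp add: hermitian_op_def cadj_def vec_eq_iff)
next
  case (insert x F) thus ?case by (simp add: herm_add)
qed

lemma trace_sum: "trace (sum f J :: complex^'n^'n) = (\<Sum>j\<in>J. trace (f j))"
  by (simp add: trace_def sum_mat_comp) (rule sum.swap)

lemma herm_zero: assumes "hermitian_op (X::complex^'n^'n)" "Re (trace (X ** X)) = 0" shows "X = 0"
proof -
  have "(\<Sum>i\<in>UNIV. \<Sum>k\<in>UNIV. (cmod (X$i$k))^2) = 0" using assms(2) unfolding herm_sq[OF assms(1)] by simp
  hence "\<forall>i\<in>UNIV. (\<Sum>k\<in>UNIV. (cmod (X$i$k))^2) = 0"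
    by (subst sum_nonneg_eq_0_iff[symmetric]) (auto intro: sum_nonneg)
  hence "\<And>i. \<forall>k\<in>UNIV. (cmod (X$i$k))^2 = 0"
    by (subst sum_nonneg_eq_0_iff[symmetric]) auto
  thus ?thesis by (simp add: vec_eq_iff)
qed

context
  fixes Q :: "nat \<Rightarrow> complex^'n^'n"
  assumes nq: "NQPR Q"
begin

lemma Qh: "j < CARD('n)^2 \<Longrightarrow> hermitian_op (Q j)"
  using nq unfolding NQPR_def Let_def by blast
lemma Qtr: "j < CARD('n)^2 \<Longrightarrow> trace (Q j) = 1"
  using nq unfolding NQPR_def Let_def by blast
lemma Qorth: "j < CARD('n)^2 \<Longrightarrow> k < CARD('n)^2 \<Longrightarrow> trace (Q j ** Q k) = (if j = k then of_nat CARD('n) else 0)"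
  using nq unfolding NQPR_def Let_def by blast

lemma sumQ: "(\<Sum>k<CARD('n)^2. Q k) = real CARD('n) *\<^sub>R mat 1"
proof -
  define D where "D = CARD('n)^2"
  define d where "d = CARD('n)"
  define S where "S = (\<Sum>k<D. Q k)"
  have t1: "trace (S ** S) = of_nat (D * d)"
  proof -
    have "trace (S ** S) = (\<Sum>j<D. \<Sum>k<D. trace (Q j ** Q k))"
      unfolding S_def by (simp add: tr_sum_l tr_sum_r) (rule sum.swap)
    also have "\<dots> = (\<Sum>j<D. of_nat d)"
    proof (rule sum.cong[OF refl])
      fix j assume "j \<in> {..<D}"
      hence j: "j < D" by simp
      have "(\<Sum>k<D. trace (Q j ** Q k)) = (\<Sum>k<D. if j = k then of_nat d else 0)"
        by (rule sum.cong[OF refl]) (use j in \<open>simp add: Qorth D_def d_def\<close>)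
      also have "\<dots> = of_nat d" using j by simp
      finally show "(\<Sum>k<D. trace (Q j ** Q k)) = of_nat d" .
    qed
    finally show ?thesis by simp
  qed
  have t2: "trace (S ** mat 1) = of_nat D"
    unfolding S_def matrix_mul_rid trace_sum by (simp add: Qtr D_def)
  have t3: "trace (mat 1 ** S) = of_nat D" unfolding trace_mul_sym[of "mat 1 :: complex^'n^'n" S] by (rule t2)
  define X where "X = S - real d *\<^sub>R mat 1"
  have hX: "hermitian_op X" unfolding X_def S_def
    by (intro herm_diff herm_sum herm_scale herm_I Qh) (simp add: D_def)
  have "trace (X ** X) = trace (S ** S) - of_real d * trace (S ** mat 1) - of_real d * trace (mat 1 ** S)
        + of_real d * of_real d * trace ((mat 1::complex^'n^'n) ** mat 1)"
    unfolding X_def by (simp add: tr_diff_l tr_diff_r tr_scale_l tr_scale_r del: matrix_mul_rid matrix_mul_lid) (simp add: algebra_simps)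
  also have "\<dots> = 0" unfolding t1 t2 t3 using trace_I[where 'a=complex and 'n='n]
    by (simp add: D_def d_def power2_eq_square)
  finally have "X = 0" using herm_zero[OF hX] by simp
  thus ?thesis unfolding X_def S_def D_def d_def by simp
qed

end


definition Rop :: "(nat \<Rightarrow> complex^'n^'n) \<Rightarrow> nat \<Rightarrow> complex^'n^'n" where
  "Rop Q j = (let d = real CARD('n); s = sqrt (d + 1) in ((1 + s) / (d * s)) *\<^sub>R mat 1 - (1 / s) *\<^sub>R Q j)"

lemma quad_id: fixes d N a :: real assumes "d^2 - 1 > 0" "d * N^2 + 2 * N = d^2 - d - 1"
  shows "a^2 + (d + a)^2 / (d^2 - 1) = d + d * (a - N) * (d * (a + N) + 2) / (d^2 - 1)"
proof -
  have "a^2 * (d^2 - 1) + (d + a)^2 = d * (d^2 - 1) + d * (a - N) * (d * (a + N) + 2)"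
  proof -
    have "d * (a - N) * (d * (a + N) + 2) = d * (d * a^2 + 2 * a) - d * (d * N^2 + 2 * N)"
      by (simp add: algebra_simps power2_eq_square)
    also have "\<dots> = d * (d * a^2 + 2 * a) - d * (d^2 - d - 1)" unfolding assms(2) ..
    finally show ?thesis by (simp add: algebra_simps power2_eq_square)
  qed
  thus ?thesis using assms(1) by (simp add: field_simps)
qed

lemma aux_c0: "(m::real) \<noteq> 0 \<Longrightarrow> S - 2 * (x / m) * x + m * (x / m)^2 = S - x^2 / m"
  by (simp add: field_simps power2_eq_square)

lemma Re_ofr: "Re (complex_of_real r * z) = r * Re z" by simp

context
  fixes Q :: "nat \<Rightarrow> complex^'n^'n"
  assumes nq: "NQPR Q" and d2: "CARD('n) \<ge> 2"
begin

lemma main: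
  assumes rho: "density_op \<rho>" and j: "j < CARD('n)^2" and neg: "Re (trace (\<rho> ** Q j)) \<le> - Nplus CARD('n)"
  shows "\<rho> = Rop Q j"
proof -
  define D where "D = CARD('n)^2"
  define d where "d = real CARD('n)"
  define s where "s = sqrt (d + 1)"
  define N where "N = Nplus CARD('n)"
  define c where "c = (1 + s) / (d * s)"
  have dd: "d \<ge> 2" using d2 unfolding d_def by simp
  have Nd: "N = ((d - 1) * s - 1) / d" unfolding N_def Nplus_def d_def s_def ..
  note rf = realfacts[OF dd s_def Nd c_def]
  have d0: "d > 0" using dd by simp
  have hr: "hermitian_op \<rho>" and pr: "psd \<rho>" and tr1: "trace \<rho> = 1"
    using rho unfolding density_op_def psd_def by auto
  define q where "q = (\<lambda>k. Re (trace (\<rho> ** Q k)))"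
  have jD: "j < D" using j D_def by simp
  have sumq: "(\<Sum>k<D. q k) = d"
  proof -
    have "(\<Sum>k<D. q k) = Re (trace (\<rho> ** (\<Sum>k<D. Q k)))"
      unfolding q_def tr_sum_r[OF finite_lessThan] Re_sum ..
    also have "\<dots> = d" unfolding D_def sumQ[OF nq] tr_scale_r using tr1 by (simp add: d_def)
    finally show ?thesis .
  qed
  \<comment> \<open>(b) Bessel\<close>
  define A where "A = (\<Sum>k<D. q k *\<^sub>R Q k)"
  define Y where "Y = \<rho> - (1 / d) *\<^sub>R A"
  have hA: "hermitian_op A" unfolding A_def
    by (intro herm_sum herm_scale Qh[OF nq]) (simp add: D_def)
  have hY: "hermitian_op Y" unfolding Y_def by (intro herm_diff hr herm_scale hA)
  have rA: "Re (trace (\<rho> ** A)) = (\<Sum>k<D. (q k)^2)"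
    unfolding A_def tr_sum_r[OF finite_lessThan] tr_scale_r Re_sum
    by (simp add: q_def power2_eq_square)
  have rA': "Re (trace (A ** \<rho>)) = (\<Sum>k<D. (q k)^2)" using rA trace_mul_sym[of A \<rho>] by simp
  have AA: "trace (A ** A) = (\<Sum>k<D. of_real (q k * q k * d))"
  proof -
    have "trace (A ** A) = (\<Sum>i<D. \<Sum>k<D. of_real (q i) * (of_real (q k) * trace (Q k ** Q i)))"
      unfolding A_def tr_sum_l[OF finite_lessThan] tr_scale_l tr_sum_r[OF finite_lessThan] tr_scale_r
      by (simp add: sum_distrib_left)
    also have "\<dots> = (\<Sum>i<D. of_real (q i * q i * d))"
    proof (rule sum.cong[OF refl])
      fix i assume "i \<in> {..<D}"
      hence i: "i < D" by simp
      have "(\<Sum>k<D. of_real (q i) * (of_real (q k) * trace (Q k ** Q i)))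
          = (\<Sum>k<D. if k = i then of_real (q i * q i * d) else 0)"
        by (rule sum.cong[OF refl]) (use i in \<open>simp add: Qorth[OF nq] D_def d_def\<close>)
      also have "\<dots> = of_real (q i * q i * d)" using i by simp
      finally show "(\<Sum>k<D. of_real (q i) * (of_real (q k) * trace (Q k ** Q i))) = of_real (q i * q i * d)" .
    qed
    finally show ?thesis .
  qed
  define t where "t = Re (trace (\<rho> ** \<rho>))"
  define G where "G = Re (trace (Y ** Y))"
  have trYY: "trace (Y ** Y) = trace (\<rho> ** \<rho>) - of_real (1/d) * trace (\<rho> ** A)
      - of_real (1/d) * trace (A ** \<rho>) + of_real (1/d) * (of_real (1/d) * trace (A ** A))"
    unfolding Y_def tr_diff_l tr_diff_r tr_scale_l tr_scale_r by (simp add: algebra_simps)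
  have rAA: "Re (trace (A ** A)) = d * (\<Sum>k<D. (q k)^2)"
    unfolding AA Re_sum by (simp add: sum_distrib_left power2_eq_square mult_ac)
  have "G = t - (1/d) * (\<Sum>k<D. (q k)^2) - (1/d) * (\<Sum>k<D. (q k)^2) + (1/d) * ((1/d) * (d * (\<Sum>k<D. (q k)^2)))"
    unfolding G_def t_def trYY by (simp only: Re_ofr minus_complex.sel plus_complex.sel rA rA' rAA)
  hence G': "G = t - (\<Sum>k<D. (q k)^2) / d" using d0 by simp
  have sq: "(\<Sum>k<D. (q k)^2) = d * (t - G)" unfolding G' using d0 by simp
  have G0: "G \<ge> 0" unfolding G_def herm_sq[OF hY] by (simp add: sum_nonneg)
  have t1: "t \<le> 1" unfolding t_def by (rule tr_sq_le[OF hr pr tr1])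
  define a where "a = - q j"
  have aN: "a \<ge> N" using neg unfolding a_def q_def N_def by simp
  define K where "K = {..<D} - {j}"
  have fK: "finite K" unfolding K_def by simp
  have cK: "real (card K) = d^2 - 1" unfolding K_def using jD by (simp add: D_def d_def)
  have "d^2 \<ge> 2^2" using power_mono[of 2 d 2] dd by simp
  hence n0: "d^2 - 1 > 0" by simp
  have split: "\<And>f. (\<Sum>k<D. f k) = f j + (\<Sum>k\<in>K. f k)"
    unfolding K_def using jD by (simp add: sum.remove)
  have sK: "(\<Sum>k\<in>K. q k) = d + a" using sumq split[of q] a_def by simp
  define c0 where "c0 = (d + a) / (d^2 - 1)"
  define E where "E = (\<Sum>k\<in>K. (q k - c0)^2)"
  have E0: "E \<ge> 0" unfolding E_def by (simp add: sum_nonneg)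
  have "E = (\<Sum>k\<in>K. (q k)^2) - 2 * c0 * (\<Sum>k\<in>K. q k) + real (card K) * c0^2"
    unfolding E_def by (simp add: power2_diff sum_subtractf sum.distrib sum_distrib_left sum_distrib_right mult_ac)
  also have "\<dots> = (\<Sum>k\<in>K. (q k)^2) - (d + a)^2 / (d^2 - 1)"
    unfolding sK cK c0_def using n0 by (intro aux_c0) simp
  finally have EK: "(\<Sum>k\<in>K. (q k)^2) = E + (d + a)^2 / (d^2 - 1)" by simp
  have sq2: "(\<Sum>k<D. (q k)^2) = a^2 + E + (d + a)^2 / (d^2 - 1)"
    using split[of "\<lambda>k. (q k)^2"] EK a_def by simp
  define W where "W = d * (a - N) * (d * (a + N) + 2) / (d^2 - 1)"
  have W0: "W \<ge> 0" unfolding W_def using aN d0 n0 rf(3) by (intro divide_nonneg_pos mult_nonneg_nonneg) auto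
  have "d * (t - G) = d + E + W" using sq sq2 quad_id[OF n0 rf(6), of a] W_def by simp
  hence e1: "d * t - d = E + W + d * G" by (simp add: algebra_simps)
  have e2: "d * t \<le> d" using t1 d0 by simp
  have e3: "d * G \<ge> 0" using G0 d0 by simp
  have EWG1: "E = 0" "W = 0" "d * G = 0" using e1 e2 e3 E0 W0 by linarith+
  have EWG: "E = 0" "W = 0" "G = 0" using EWG1 d0 by auto
  have "a - N = 0"
  proof -
    have "d * (a + N) + 2 > 0" using aN rf(3) d0 by (simp add: add_pos_pos)
    thus ?thesis using EWG(2) n0 d0 unfolding W_def by simp
  qed
  hence aN': "a = N" by simp
  have c0c: "c0 = c" unfolding c0_def aN' using rf(5) by simp
  have qK: "\<And>k. k \<in> K \<Longrightarrow> q k = c"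
  proof -
    fix k assume k: "k \<in> K"
    have "\<forall>k\<in>K. (q k - c0)^2 = 0" using EWG(1) fK unfolding E_def
      by (subst sum_nonneg_eq_0_iff[symmetric]) auto
    thus "q k = c" using k c0c by simp
  qed
  have Y0: "Y = 0" using herm_zero[OF hY] EWG(3) unfolding G_def by simp
  hence rhoA: "\<rho> = (1 / d) *\<^sub>R A" unfolding Y_def by simp
  have "A = q j *\<^sub>R Q j + (\<Sum>k\<in>K. c *\<^sub>R Q k)"
    unfolding A_def split[of "\<lambda>k. q k *\<^sub>R Q k"] using qK by simp
  also have "(\<Sum>k\<in>K. c *\<^sub>R Q k) = c *\<^sub>R ((\<Sum>k<D. Q k) - Q j)"
    using split[of Q] by (simp add: scaleR_sum_right)
  also have "(\<Sum>k<D. Q k) = d *\<^sub>R mat 1" unfolding D_def d_def by (rule sumQ[OF nq])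
  finally have A1: "A = q j *\<^sub>R Q j + c *\<^sub>R (d *\<^sub>R mat 1 - Q j)" .
  have qj: "q j = - N" using aN' a_def by simp
  have "A = (- N - c) *\<^sub>R Q j + (c * d) *\<^sub>R mat 1"
    unfolding A1 qj by (simp add: algebra_simps scaleR_diff_right)
  hence "\<rho> = ((- N - c) / d) *\<^sub>R Q j + c *\<^sub>R mat 1"
    using rhoA d0 by (simp add: scaleR_add_right)
  also have "(- N - c) / d = - (1 / s)" using rf(4) d0 rf(2) by (simp add: field_simps)
  finally show ?thesis unfolding Rop_def Let_def s_def[symmetric] d_def[symmetric] c_def[symmetric]
    by simp
qed

end


lemma r1_mv: "(\<chi> i j. v $ i * cnj (v $ j)) *v x = (\<chi> i. v $ i * cinner v x)"
  by (simp add: vec_eq_iff matrix_vector_mult_def cinner_def sum_distrib_left mult.assoc)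

lemma rank_one_density: assumes "rank_one_projector P" shows "density_op P"
proof -
  obtain v where v: "cinner v v = 1" and P: "P = (\<chi> i j. v $ i * cnj (v $ j))"
    using assms unfolding rank_one_projector_def by blast
  have "hermitian_op P" unfolding P hermitian_op_def cadj_def by (simp add: vec_eq_iff mult.commute)
  moreover have "0 \<le> Re (cinner x (P *v x))" for x
  proof -
    have "cinner x (P *v x) = cnj (cinner v x) * cinner v x"
      unfolding P r1_mv by (simp add: cinner_def sum_distrib_right mult_ac)
    also have "\<dots> = of_real ((cmod (cinner v x))^2)" by (simp only: complex_norm_square mult.commute)
    finally show ?thesis by simp
  qed
  moreover have "trace P = 1" using v unfolding P by (simp add: trace_def cinner_def mult.commute)
  ultimately show ?thesis unfolding density_op_def by blast
qed

lemma Qplus_eq: "Qplus P j = (- sqrt (real CARD('n) + 1)) *\<^sub>R P j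
   + ((1 + sqrt (real CARD('n) + 1)) / real CARD('n)) *\<^sub>R (mat 1 :: complex^'n^'n)"
  unfolding Qplus_def Let_def vec_eq_iff
  by (simp only: vector_add_component vector_scaleR_component vec_lambda_beta)
     (simp add: scaleR_conv_of_real)

lemma Rop_eq: "Rop Q j = ((1 + sqrt (real CARD('n) + 1)) / (real CARD('n) * sqrt (real CARD('n) + 1))) *\<^sub>R (mat 1 :: complex^'n^'n)
   - (1 / sqrt (real CARD('n) + 1)) *\<^sub>R Q j"
  unfolding Rop_def Let_def ..


context
  fixes Q :: "nat \<Rightarrow> complex^'n^'n"
  assumes nq: "NQPR Q" and d2: "CARD('n) \<ge> 2"
begin

lemma Rop_tr: assumes j: "j < CARD('n)^2" and k: "k < CARD('n)^2"
  shows "trace (Rop Q j ** Rop Q k) = of_real ((real CARD('n) * (if j = k then 1 else 0) + 1) / (real CARD('n) + 1))"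
proof -
  define d where "d = real CARD('n)"
  define s where "s = sqrt (d + 1)"
  define N where "N = Nplus CARD('n)"
  define c where "c = (1 + s) / (d * s)"
  have dd: "d \<ge> 2" using d2 unfolding d_def by simp
  have Nd: "N = ((d - 1) * s - 1) / d" unfolding N_def Nplus_def d_def s_def ..
  note rf = realfacts[OF dd s_def Nd c_def]
  have e: "Rop Q i = c *\<^sub>R mat 1 - (1 / s) *\<^sub>R Q i" for i
    unfolding Rop_eq c_def s_def d_def ..
  have I1: "trace (mat 1 ** Q k) = 1" "trace (Q j ** mat 1) = 1" using Qtr[OF nq] j k by simp_all
  have I2: "trace ((mat 1::complex^'n^'n) ** mat 1) = of_real d" by (simp add: d_def trace_I)
  have "trace (Rop Q j ** Rop Q k) = of_real c * (of_real c * of_real d) - of_real c * (of_real (1/s))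
        - of_real (1/s) * of_real c + of_real (1/s) * (of_real (1/s) * trace (Q j ** Q k))"
    unfolding e tr_diff_l tr_diff_r tr_scale_l tr_scale_r I1 I2 by (simp add: algebra_simps)
  also have "\<dots> = of_real (c^2 * d - 2 * c / s + (if j = k then d / s^2 else 0))"
    using Qorth[OF nq j k] by (simp add: d_def power2_eq_square)
  also have "c^2 * d - 2 * c / s + (if j = k then d / s^2 else 0) = (d * (if j = k then 1 else 0) + 1) / (d + 1)"
  proof (cases "j = k")
    case True thus ?thesis using rf(11) dd by simp
  next
    case False thus ?thesis using rf(10) by simp
  qed
  finally show ?thesis unfolding d_def .
qed


lemma s_pos: "sqrt (real CARD('n) + 1) > 0"
  by simp

lemma Rop_inj: "inj_on (Rop Q) {..<CARD('n)^2}"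
proof (rule inj_onI)
  fix j k assume j: "j \<in> {..<CARD('n)^2}" and k: "k \<in> {..<CARD('n)^2}" and e: "Rop Q j = Rop Q k"
  define s where "s = sqrt (real CARD('n) + 1)"
  have "(1 / s) *\<^sub>R Q j = (1 / s) *\<^sub>R Q k" using e unfolding Rop_eq s_def[symmetric] by simp
  hence QQ: "Q j = Q k" using s_pos unfolding s_def by simp
  show "j = k"
  proof (rule ccontr)
    assume "j \<noteq> k"
    hence "trace (Q j ** Q k) = 0" using Qorth[OF nq] j k by simp
    moreover have "trace (Q j ** Q j) = of_nat CARD('n)" using Qorth[OF nq] j by simp
    ultimately show False using QQ by simp
  qed
qed

lemma Qplus_Rop: assumes j: "j < CARD('n)^2" shows "Qplus (Rop Q) j = Q j"
proof -
  define d where "d = real CARD('n)"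
  define s where "s = sqrt (d + 1)"
  define N where "N = Nplus CARD('n)"
  define c where "c = (1 + s) / (d * s)"
  have dd: "d \<ge> 2" using d2 unfolding d_def by simp
  have Nd: "N = ((d - 1) * s - 1) / d" unfolding N_def Nplus_def d_def s_def ..
  note rf = realfacts[OF dd s_def Nd c_def]
  have sp: "s > 0" using rf(2) by simp
  have "Qplus (Rop Q) j = (- s) *\<^sub>R (c *\<^sub>R mat 1 - (1 / s) *\<^sub>R Q j) + ((1 + s) / d) *\<^sub>R mat 1"
    unfolding Qplus_eq Rop_eq d_def[symmetric] s_def[symmetric] c_def[symmetric] ..
  also have "\<dots> = (- (s * c) + (1 + s) / d) *\<^sub>R mat 1 + Q j"
    using sp by (simp add: scaleR_diff_right algebra_simps)
  also have "- (s * c) + (1 + s) / d = 0" using rf(9) by simp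
  finally show ?thesis by simp
qed

lemma Rop_of_Qplus: assumes "Q j = Qplus P j" shows "Rop Q j = P j"
proof -
  define d where "d = real CARD('n)"
  define s where "s = sqrt (d + 1)"
  have sp: "s > 0" unfolding s_def d_def by simp
  have "Rop Q j = ((1 + s) / (d * s)) *\<^sub>R mat 1 - (1 / s) *\<^sub>R ((- s) *\<^sub>R P j + ((1 + s) / d) *\<^sub>R mat 1)"
    unfolding Rop_eq assms Qplus_eq d_def[symmetric] s_def[symmetric] ..
  also have "\<dots> = ((1 + s) / (d * s) - (1 + s) / (d * s)) *\<^sub>R mat 1 + P j"
    using sp by (simp add: scaleR_diff_right scaleR_add_right algebra_simps)
  finally show ?thesis by simp
qed

lemma T_sub: "{\<rho>. density_op \<rho> \<and> negativity Q \<rho> = Nplus CARD('n)} \<subseteq> Rop Q ` {..<CARD('n)^2}"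
proof
  fix \<rho> assume "\<rho> \<in> {\<rho>. density_op \<rho> \<and> negativity Q \<rho> = Nplus CARD('n)}"
  hence rho: "density_op \<rho>" and ng: "negativity Q \<rho> = Nplus CARD('n)" by auto
  define d where "d = real CARD('n)"
  define s where "s = sqrt (d + 1)"
  define N where "N = Nplus CARD('n)"
  define c where "c = (1 + s) / (d * s)"
  have dd: "d \<ge> 2" using d2 unfolding d_def by simp
  have Nd: "N = ((d - 1) * s - 1) / d" unfolding N_def Nplus_def d_def s_def ..
  note rf = realfacts[OF dd s_def Nd c_def]
  define f where "f = (\<lambda>j. Re (trace (\<rho> ** Q j)))"
  define M where "M = Min (f ` {..<CARD('n)^2})"
  have "max 0 (- M) = N" using ng unfolding negativity_def f_def M_def N_def .
  hence MN: "M = - N" using rf(3) by (auto simp: max_def split: if_splits)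
  have "(0::nat) \<in> {..<CARD('n)^2}" by simp
  hence ne: "{..<CARD('n)^2} \<noteq> {}" by blast
  have "M \<in> f ` {..<CARD('n)^2}" unfolding M_def using ne by (intro Min_in) auto
  then obtain j where j: "j < CARD('n)^2" and fj: "f j = M" by auto
  have "\<rho> = Rop Q j"
    by (rule main[OF nq d2 rho j]) (use fj MN in \<open>simp add: f_def N_def\<close>)
  thus "\<rho> \<in> Rop Q ` {..<CARD('n)^2}" using j by auto
qed

lemma neg_P: assumes sic: "SIC P" and QP: "\<forall>j<CARD('n)^2. Q j = Qplus P j" and j: "j < CARD('n)^2"
  shows "negativity Q (P j) = Nplus CARD('n)"
proof -
  define d where "d = real CARD('n)"
  define s where "s = sqrt (d + 1)"
  define N where "N = Nplus CARD('n)"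
  define c where "c = (1 + s) / (d * s)"
  have dd: "d \<ge> 2" using d2 unfolding d_def by simp
  have Nd: "N = ((d - 1) * s - 1) / d" unfolding N_def Nplus_def d_def s_def ..
  note rf = realfacts[OF dd s_def Nd c_def]
  have r1: "rank_one_projector (P j)" and trPP: "\<And>k. k < CARD('n)^2 \<Longrightarrow> trace (P j ** P k) =
        of_real ((d * (if j = k then 1 else 0) + 1) / (d + 1))"
    using sic j unfolding SIC_def Let_def d_def by auto
  have trP: "trace (P j) = 1" using rank_one_density[OF r1] unfolding density_op_def by simp
  define f where "f = (\<lambda>k. Re (trace (P j ** Q k)))"
  have fk: "f k = - s * ((d * (if j = k then 1 else 0) + 1) / (d + 1)) + (1 + s) / d" if k: "k < CARD('n)^2" for k
  proof -
    have "trace (P j ** Q k) = of_real (- s) * trace (P j ** P k) + of_real ((1 + s) / d) * trace (P j)"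
      unfolding QP[rule_format, OF k] Qplus_eq tr_add_r tr_scale_r d_def[symmetric] s_def[symmetric]
      by simp
    thus ?thesis unfolding f_def trPP[OF k] trP by simp
  qed
  have "Min (f ` {..<CARD('n)^2}) = - N"
  proof (rule Min_eqI)
    show "finite (f ` {..<CARD('n)^2})" by simp
    show "- N \<in> f ` {..<CARD('n)^2}"
    proof
      show "- N = f j" using fk[OF j] rf(7) dd by simp
    qed (use j in simp)
    fix y assume "y \<in> f ` {..<CARD('n)^2}"
    then obtain k where k: "k < CARD('n)^2" and y: "y = f k" by auto
    show "- N \<le> y"
    proof (cases "j = k")
      case True thus ?thesis using fk[OF k] rf(7) dd y by simp
    next
      case False thus ?thesis using fk[OF k] rf(8) rf(3) y by simp
    qed
  qed
  thus ?thesis unfolding negativity_def f_def N_def using rf(3) N_def by simp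
qed

end

theorem theorem2:
  fixes Q :: "nat \<Rightarrow> complex^'n^'n"
  assumes "CARD('n) \<ge> 2"
    and "NQPR Q"
  shows "finite {\<rho>. density_op \<rho> \<and> negativity Q \<rho> = Nplus CARD('n)}
       \<and> card {\<rho>. density_op \<rho> \<and> negativity Q \<rho> = Nplus CARD('n)} \<le> CARD('n)^2
       \<and> (card {\<rho>. density_op \<rho> \<and> negativity Q \<rho> = Nplus CARD('n)} = CARD('n)^2
            \<longleftrightarrow> (\<exists>P. SIC P \<and> (\<forall>j<CARD('n)^2. Q j = Qplus P j)))"
proof -
  note d2 = assms(1) and nq = assms(2)
  define T where "T = {\<rho>. density_op \<rho> \<and> negativity Q \<rho> = Nplus CARD('n)}"
  define I where "I = {..<CARD('n)^2}"
  have sub: "T \<subseteq> Rop Q ` I" unfolding T_def I_def by (rule T_sub[OF nq d2])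
  have fI: "finite (Rop Q ` I)" unfolding I_def by simp
  have cI: "card (Rop Q ` I) = CARD('n)^2" unfolding I_def using card_image[OF Rop_inj[OF nq d2]] by simp
  have fT: "finite T" using finite_subset[OF sub fI] .
  have cT: "card T \<le> CARD('n)^2" using card_mono[OF fI sub] cI by simp
  have "card T = CARD('n)^2 \<longleftrightarrow> (\<exists>P. SIC P \<and> (\<forall>j<CARD('n)^2. Q j = Qplus P j))"
  proof
    assume c: "card T = CARD('n)^2"
    have TI: "T = Rop Q ` I" using card_subset_eq[OF fI sub] c cI by simp
    have mem: "\<And>j. j < CARD('n)^2 \<Longrightarrow> Rop Q j \<in> T" unfolding TI I_def by simp
    have "SIC (Rop Q)"
      unfolding SIC_def Let_def
    proof (intro conjI allI impI)
      fix j assume j: "j < CARD('n)^2"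
      have dens: "density_op (Rop Q j)" using mem[OF j] unfolding T_def by simp
      have tt: "trace (Rop Q j ** Rop Q j) = 1"
        unfolding Rop_tr[OF nq d2 j j] by simp
      show "rank_one_projector (Rop Q j)"
        using dens tt unfolding density_op_def psd_def[symmetric] by (intro rank_one) auto
    next
      fix j k assume j: "j < CARD('n)^2" and k: "k < CARD('n)^2"
      show "trace (Rop Q j ** Rop Q k) = of_real ((real CARD('n) * (if j = k then 1 else 0) + 1) / (real CARD('n) + 1))"
        by (rule Rop_tr[OF nq d2 j k])
    qed
    moreover have "\<forall>j<CARD('n)^2. Q j = Qplus (Rop Q) j" using Qplus_Rop[OF nq d2] by simp
    ultimately show "\<exists>P. SIC P \<and> (\<forall>j<CARD('n)^2. Q j = Qplus P j)" by blast
  next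
    assume "\<exists>P. SIC P \<and> (\<forall>j<CARD('n)^2. Q j = Qplus P j)"
    then obtain P where sic: "SIC P" and QP: "\<forall>j<CARD('n)^2. Q j = Qplus P j" by blast
    have "Rop Q ` I \<subseteq> T"
    proof
      fix x assume "x \<in> Rop Q ` I"
      then obtain j where j: "j < CARD('n)^2" and x: "x = Rop Q j" unfolding I_def by auto
      have xP: "x = P j" unfolding x using QP j by (intro Rop_of_Qplus[OF nq d2]) auto
      have "rank_one_projector (P j)" using sic j unfolding SIC_def Let_def by auto
      hence "density_op (P j)" by (rule rank_one_density)
      moreover have "negativity Q (P j) = Nplus CARD('n)" by (rule neg_P[OF nq d2 sic QP j])
      ultimately show "x \<in> T" unfolding T_def xP by simp
    qed
    hence "T = Rop Q ` I" using sub by auto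
    thus "card T = CARD('n)^2" using cI by simp
  qed
  thus ?thesis using fT cT unfolding T_def by blast
qed


end
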